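(* Let $X$ be a Banach space. Then $X$ has weak normal structure if and only if $X$ has the weak fixed point property for mappings which diminish the radius of invariant convex subsets, i.e. for every nontrivial weakly compact convex subset $K$ of $X$, every self-mapping $T:K\to K$ which diminishes the radius of invariant convex subsets of $K$ has a fixed point in $K$.
   Context: Nontrivial means containing more than one point. For $x\in X$ and $A\subseteq X$, $r_x(A)=\sup\{\|x-y\|:y\in A\}$ and $\delta(A)=\sup\{\|x-y\|:x,y\in A\}$. A mapping $T:K\to K$ diminishes the radius of invariant convex subsets of $K$ if for every convex $A\subseteq K$ with $T(A)\subseteq A$, $r_{Tx}(T(A))\le r_x(A)$ for every $x\in K$. $X$ has weak normal structure if every nontrivial weakly compact convex subset $K$ of $X$ has normal structure: for every closed convex $K_0\subseteq K$ with $\delta(K_0)>0$ there is $x_0\in K_0$ with $r_{x_0}(K_0)<\delta(K_0)$. *)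

theory Defs
  imports "HOL-Analysis.Analysis"
begin

definition weak_topology :: "'a::real_normed_vector topology" where
  "weak_topology = topology_generated_by
     {f -` U | f U. bounded_linear (f :: 'a \<Rightarrow> real) \<and> open U}"

definition weakly_compact :: "'a::real_normed_vector set \<Rightarrow> bool" where
  "weakly_compact K \<longleftrightarrow> compactin weak_topology K"

definition nontrivial :: "'a set \<Rightarrow> bool" where
  "nontrivial A \<longleftrightarrow> (\<exists>x\<in>A. \<exists>y\<in>A. x \<noteq> y)"

definition rad :: "'a::real_normed_vector \<Rightarrow> 'a set \<Rightarrow> real" where
  "rad x A = (SUP y\<in>A. norm (x - y))"

definition diminishes_radius :: "('a::real_normed_vector \<Rightarrow> 'a) \<Rightarrow> 'a set \<Rightarrow> bool" where
  "diminishes_radius T K \<longleftrightarrow>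
     (\<forall>A. A \<subseteq> K \<and> convex A \<and> T ` A \<subseteq> A \<longrightarrow> (\<forall>x\<in>K. rad (T x) (T ` A) \<le> rad x A))"

definition normal_structure :: "'a::real_normed_vector set \<Rightarrow> bool" where
  "normal_structure K \<longleftrightarrow>
     (\<forall>K0. K0 \<subseteq> K \<and> closed K0 \<and> convex K0 \<and> diameter K0 > 0 \<longrightarrow>
        (\<exists>x0\<in>K0. rad x0 K0 < diameter K0))"

definition weak_normal_structure :: "'a::real_normed_vector itself \<Rightarrow> bool" where
  "weak_normal_structure _ \<longleftrightarrow>
     (\<forall>K::'a set. nontrivial K \<and> weakly_compact K \<and> convex K \<longrightarrow> normal_structure K)"

definition weak_fpp_diminishing :: "'a::real_normed_vector itself \<Rightarrow> bool" where
  "weak_fpp_diminishing _ \<longleftrightarrow>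
     (\<forall>K::'a set. nontrivial K \<and> weakly_compact K \<and> convex K \<longrightarrow>
        (\<forall>T. T ` K \<subseteq> K \<and> diminishes_radius T K \<longrightarrow> (\<exists>x\<in>K. T x = x)))"

end

theory Submission
  imports Defs
begin
definition sublin :: "('a::real_vector \<Rightarrow> real) \<Rightarrow> bool" where
  "sublin q \<longleftrightarrow> (\<forall>x y. q (x + y) \<le> q x + q y) \<and> (\<forall>c>0. \<forall>x. q (c *\<^sub>R x) = c * q x)"

lemma sublin_0: assumes "sublin q" shows "q 0 = 0"
proof -
  have "q ((2::real) *\<^sub>R 0) = 2 * q 0" using assms unfolding sublin_def by (metis zero_less_numeral)
  then show ?thesis by simp
qed

lemma sublin_lower: assumes "sublin q" shows "- q (- x) \<le> q x"
proof -
  have "q (x + - x) \<le> q x + q (-x)" using assms unfolding sublin_def by blast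
  then show ?thesis using sublin_0[OF assms] by simp
qed

lemma sublin_minimal_linear:
  fixes q :: "'a::real_vector \<Rightarrow> real"
  assumes sq: "sublin q"
    and minq: "\<And>r. sublin r \<Longrightarrow> (\<forall>x. r x \<le> q x) \<Longrightarrow> r = q"
  shows "q (x + y) = q x + q y" "q (c *\<^sub>R x) = c * q x"
proof -
  have sub: "q (a + b) \<le> q a + q b" for a b using sq unfolding sublin_def by blast
  have hom: "c > 0 \<Longrightarrow> q (c *\<^sub>R a) = c * q a" for c a using sq unfolding sublin_def by blast
  have add: "q (a + b) = q a + q b" for a b
  proof -
    define r where "r = (\<lambda>x. INF t\<in>{0::real..}. q (x + t *\<^sub>R b) - t * q b)"
    have bdd: "bdd_below ((\<lambda>t. q (x + t *\<^sub>R b) - t * q b) ` {0..})" for x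
    proof (rule bdd_belowI2[where m="- q (- x)"])
      fix t :: real assume "t \<in> {0..}"
      then have "t = 0 \<or> t > 0" by auto
      then have "q (t *\<^sub>R b) = t * q b" using hom sublin_0[OF sq] by auto
      moreover have "q (t *\<^sub>R b) \<le> q (x + t *\<^sub>R b) + q (-x)"
        using sub[of "x + t *\<^sub>R b" "-x"] by simp
      ultimately show "- q (- x) \<le> q (x + t *\<^sub>R b) - t * q b" by simp
    qed
    have rle: "r x \<le> q (x + t *\<^sub>R b) - t * q b" if "t \<ge> 0" for x t
      unfolding r_def by (rule cINF_lower[OF bdd]) (use that in auto)
    have rge: "m \<le> r x" if "\<And>t. t \<ge> 0 \<Longrightarrow> m \<le> q (x + t *\<^sub>R b) - t * q b" for m x
      unfolding r_def by (rule cINF_greatest) (use that in auto)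
    have "sublin r"
      unfolding sublin_def
    proof (intro conjI allI impI)
      fix x y
      have "r (x + y) - (q (y + t2 *\<^sub>R b) - t2 * q b) \<le> r x" if t2: "t2 \<ge> 0" for t2
      proof (rule rge)
        fix t1 :: real assume t1: "t1 \<ge> 0"
        have "r (x + y) \<le> q ((x + y) + (t1 + t2) *\<^sub>R b) - (t1 + t2) * q b"
          using rle t1 t2 by simp
        also have "q ((x + y) + (t1 + t2) *\<^sub>R b) \<le> q (x + t1 *\<^sub>R b) + q (y + t2 *\<^sub>R b)"
          using sub[of "x + t1 *\<^sub>R b" "y + t2 *\<^sub>R b"] by (simp add: algebra_simps)
        finally show "r (x + y) - (q (y + t2 *\<^sub>R b) - t2 * q b) \<le> q (x + t1 *\<^sub>R b) - t1 * q b"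
          by (simp add: algebra_simps)
      qed
      then have "r (x + y) - r x \<le> q (y + t2 *\<^sub>R b) - t2 * q b" if "t2 \<ge> 0" for t2
        using that by fastforce
      then have "r (x + y) - r x \<le> r y" by (intro rge) auto
      then show "r (x + y) \<le> r x + r y" by simp
    next
      fix c :: real and x assume c: "c > 0"
      have "r (c *\<^sub>R x) / c \<le> r x"
      proof (rule rge)
        fix t :: real assume t: "t \<ge> 0"
        have "r (c *\<^sub>R x) \<le> q (c *\<^sub>R x + (c * t) *\<^sub>R b) - (c * t) * q b"
          using rle c t by simp
        also have "q (c *\<^sub>R x + (c * t) *\<^sub>R b) = c * q (x + t *\<^sub>R b)"
          using hom[OF c, of "x + t *\<^sub>R b"] by (simp add: algebra_simps)
        finally show "r (c *\<^sub>R x) / c \<le> q (x + t *\<^sub>R b) - t * q b"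
          using c by (simp add: divide_simps algebra_simps)
      qed
      moreover have "c * r x \<le> r (c *\<^sub>R x)"
      proof (rule rge)
        fix t :: real assume t: "t \<ge> 0"
        have "r x \<le> q (x + (t / c) *\<^sub>R b) - (t / c) * q b"
          using rle[of "t / c" x] c t by simp
        also have "q (x + (t / c) *\<^sub>R b) = q (c *\<^sub>R x + t *\<^sub>R b) / c"
          using hom[of c "x + (t / c) *\<^sub>R b"] c by (simp add: algebra_simps)
        finally show "c * r x \<le> q (c *\<^sub>R x + t *\<^sub>R b) - t * q b"
          using c by (simp add: divide_simps algebra_simps)
      qed
      ultimately show "r (c *\<^sub>R x) = c * r x"
        using c by (simp add: divide_simps mult.commute)
    qed
    moreover have "\<forall>x. r x \<le> q x" using rle[of 0] by simp
    ultimately have "r = q" by (rule minq)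
    then have "q a \<le> q (a + 1 *\<^sub>R b) - 1 * q b" using rle[of 1 a] by simp
    then show ?thesis using sub[of a b] by simp
  qed
  show "q (x + y) = q x + q y" by (rule add)
  have neg: "q (- a) = - q a" for a
    using add[of a "-a"] sublin_0[OF sq] by simp
  show "q (c *\<^sub>R x) = c * q x"
  proof -
    consider "c > 0" | "c = 0" | "c < 0" by linarith
    then show ?thesis
    proof cases
      case 3
      then have "q ((- c) *\<^sub>R (- x)) = (- c) * q (- x)" by (intro hom) simp
      moreover have "(- c) *\<^sub>R (- x) = c *\<^sub>R x" by simp
      ultimately have "q (c *\<^sub>R x) = (- c) * q (- x)" by metis
      then show ?thesis using neg[of x] by simp
    qed (use hom sublin_0[OF sq] in auto)
  qed
qed

lemma sublin_dominated_linear: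
  fixes p :: "'a::real_vector \<Rightarrow> real"
  assumes sp: "sublin p"
  shows "\<exists>f. (\<forall>x y. f (x + y) = f x + f y) \<and> (\<forall>c x. f (c *\<^sub>R x) = c * f x) \<and> (\<forall>x. f x \<le> p x)"
proof -
  define A where "A = {q. sublin q \<and> (\<forall>x. q x \<le> p x)}"
  define P where "P = (\<lambda>a b :: 'a \<Rightarrow> real. \<forall>x. b x \<le> a x)"
  have po: "partial_order_on A (relation_of P A)"
    unfolding partial_order_on_def preorder_on_def refl_on_def trans_def antisym_def relation_of_def P_def
    by (auto intro: order_trans antisym ext simp: fun_eq_iff)
  have ch: "\<exists>u \<in> A. \<forall>a \<in> C. P a u" if C: "C \<in> Chains (relation_of P A)" for C
  proof (cases "C = {}")
    case True
    then show ?thesis using sp unfolding A_def by auto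
  next
    case False
    have CA: "C \<subseteq> A" using C unfolding Chains_def relation_of_def by blast
    have cmp2: "(\<forall>x. a x \<le> b x) \<or> (\<forall>x. b x \<le> a x)" if "a \<in> C" "b \<in> C" for a b
      using C that unfolding Chains_def relation_of_def P_def by blast
    define u where "u = (\<lambda>x. INF q\<in>C. q x)"
    have bdd: "bdd_below ((\<lambda>q. q x) ` C)" for x
    proof (rule bdd_belowI2[where m="- p (- x)"])
      fix q assume "q \<in> C"
      then have "sublin q" "q (-x) \<le> p (-x)" using CA unfolding A_def by auto
      then show "- p (- x) \<le> q x" using sublin_lower[of q x] by linarith
    qed
    have ule: "u x \<le> q x" if "q \<in> C" for q x
      unfolding u_def by (rule cINF_lower[OF bdd that])
    have uge: "m \<le> u x" if "\<And>q. q \<in> C \<Longrightarrow> m \<le> q x" for m x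
      unfolding u_def by (rule cINF_greatest) (use that False in auto)
    have qsub: "q \<in> C \<Longrightarrow> q (x + y) \<le> q x + q y" for q x y
      using CA unfolding A_def sublin_def by blast
    have qhom: "q \<in> C \<Longrightarrow> c > 0 \<Longrightarrow> q (c *\<^sub>R x) = c * q x" for q c x
      using CA unfolding A_def sublin_def by blast
    have "sublin u"
      unfolding sublin_def
    proof (intro conjI allI impI)
      fix x y
      have "u (x + y) - q2 y \<le> u x" if q2: "q2 \<in> C" for q2
      proof (rule uge)
        fix q1 assume q1: "q1 \<in> C"
        from cmp2[OF q1 q2] have "u (x + y) \<le> q1 x + q2 y"
        proof
          assume "\<forall>x. q1 x \<le> q2 x"
          then have "q1 (x + y) \<le> q1 x + q2 y" using qsub[OF q1, of x y] by (smt (verit))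
          then show ?thesis using ule[OF q1] by (smt (verit))
        next
          assume "\<forall>x. q2 x \<le> q1 x"
          then have "q2 (x + y) \<le> q1 x + q2 y" using qsub[OF q2, of x y] by (smt (verit))
          then show ?thesis using ule[OF q2] by (smt (verit))
        qed
        then show "u (x + y) - q2 y \<le> q1 x" by simp
      qed
      then have "u (x + y) - u x \<le> q2 y" if "q2 \<in> C" for q2 using that by fastforce
      then have "u (x + y) - u x \<le> u y" by (intro uge) auto
      then show "u (x + y) \<le> u x + u y" by simp
    next
      fix c :: real and x assume c: "c > 0"
      have "u (c *\<^sub>R x) / c \<le> u x"
      proof (rule uge)
        fix q assume q: "q \<in> C"
        have "u (c *\<^sub>R x) \<le> c * q x" using ule[OF q] qhom[OF q c] by metis
        then show "u (c *\<^sub>R x) / c \<le> q x" using c by (simp add: divide_simps mult.commute)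
      qed
      moreover have "c * u x \<le> u (c *\<^sub>R x)"
      proof (rule uge)
        fix q assume q: "q \<in> C"
        have "u x \<le> q x" by (rule ule[OF q])
        then show "c * u x \<le> q (c *\<^sub>R x)" using qhom[OF q c] c by simp
      qed
      ultimately show "u (c *\<^sub>R x) = c * u x"
        using c by (simp add: divide_simps mult.commute)
    qed
    moreover have "\<forall>x. u x \<le> p x"
    proof
      fix x
      obtain q where q: "q \<in> C" using False by blast
      then have "q x \<le> p x" using CA unfolding A_def by blast
      then show "u x \<le> p x" using ule[OF q, of x] by linarith
    qed
    ultimately have "u \<in> A" unfolding A_def by simp
    moreover have "\<forall>a\<in>C. P a u" unfolding P_def using ule by blast
    ultimately show ?thesis by blast
  qed
  obtain m where mA: "m \<in> A" and mmax: "\<And>a. a \<in> A \<Longrightarrow> P m a \<Longrightarrow> a = m"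
    using predicate_Zorn[OF po ch] by blast
  have sm: "sublin m" and mp: "\<forall>x. m x \<le> p x" using mA unfolding A_def by auto
  have minq: "r = m" if "sublin r" "\<forall>x. r x \<le> m x" for r
  proof (rule mmax)
    show "r \<in> A" using that mp unfolding A_def by (auto intro: order_trans)
    show "P m r" using that unfolding P_def by auto
  qed
  show ?thesis
    using sublin_minimal_linear[OF sm minq] mp by blast
qed

lemma separation_aux:
  fixes C :: "'a::real_normed_vector set" and z :: 'a
  assumes cC: "convex C" and ne: "C \<noteq> {}" and dC: "\<And>c. c \<in> C \<Longrightarrow> d \<le> norm (c - z)"
  shows "\<exists>f::'a \<Rightarrow> real. bounded_linear f \<and> (\<forall>v. \<bar>f v\<bar> \<le> norm v) \<and> (\<forall>c\<in>C. f c \<le> f z - d)"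
proof -
  define S where "S = {0::real..} \<times> C"
  define g where "g = (\<lambda>v (w::real \<times> 'a). norm (v - fst w *\<^sub>R (snd w - z)) - fst w * d)"
  define p where "p = (\<lambda>v. INF w\<in>S. g v w)"
  have Sne: "S \<noteq> {}" using ne unfolding S_def by auto
  have glow: "- norm v \<le> g v w" if wS: "w \<in> S" for v w
  proof -
    obtain t c where w: "w = (t, c)" "t \<ge> 0" "c \<in> C" using wS unfolding S_def by auto
    have "t * d \<le> t * norm (c - z)" using dC[OF w(3)] w(2) by (simp add: mult_left_mono)
    also have "\<dots> = norm (t *\<^sub>R (c - z))" using w(2) by simp
    also have "\<dots> \<le> norm (v - t *\<^sub>R (c - z)) + norm v"
      by (metis add.commute norm_minus_commute norm_triangle_sub)
    finally show ?thesis unfolding g_def w by simp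
  qed
  have bdd: "bdd_below (g v ` S)" for v
    by (rule bdd_belowI2[where m="- norm v"]) (rule glow)
  have ple: "p v \<le> g v w" if "w \<in> S" for v w
    unfolding p_def by (rule cINF_lower[OF bdd that])
  have pge: "m \<le> p v" if "\<And>w. w \<in> S \<Longrightarrow> m \<le> g v w" for m v
    unfolding p_def by (rule cINF_greatest) (use that Sne in auto)
  have sp: "sublin p"
    unfolding sublin_def
  proof (intro conjI allI impI)
    fix x y
    have key: "p (x + y) \<le> g x w1 + g y w2" if w1: "w1 \<in> S" and w2: "w2 \<in> S" for w1 w2
    proof -
      obtain t1 c1 where w1': "w1 = (t1, c1)" "t1 \<ge> 0" "c1 \<in> C" using w1 unfolding S_def by auto
      obtain t2 c2 where w2': "w2 = (t2, c2)" "t2 \<ge> 0" "c2 \<in> C" using w2 unfolding S_def by auto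
      obtain c where c: "c \<in> C" "(t1 + t2) *\<^sub>R (c - z) = t1 *\<^sub>R (c1 - z) + t2 *\<^sub>R (c2 - z)"
      proof (cases "t1 + t2 = 0")
        case True
        then have "t1 = 0" "t2 = 0" using w1' w2' by auto
        then show ?thesis using that[of c1] w1' by simp
      next
        case False
        then have tp: "t1 + t2 > 0" using w1' w2' by auto
        define c where "c = (t1 / (t1 + t2)) *\<^sub>R c1 + (t2 / (t1 + t2)) *\<^sub>R c2"
        have "c \<in> C" unfolding c_def
          by (rule convexD[OF cC w1'(3) w2'(3)]) (use tp w1' w2' in \<open>auto simp: divide_simps\<close>)
        have e: "(t1 + t2) *\<^sub>R c = t1 *\<^sub>R c1 + t2 *\<^sub>R c2"
          unfolding c_def using tp by (simp add: scaleR_add_right scaleR_scaleR)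
        moreover have "(t1 + t2) *\<^sub>R (c - z) = t1 *\<^sub>R (c1 - z) + t2 *\<^sub>R (c2 - z)"
          by (simp only: scaleR_diff_right e) (simp add: algebra_simps)
        ultimately show ?thesis using that \<open>c \<in> C\<close> by blast
      qed
      have "(t1 + t2, c) \<in> S" using c w1' w2' unfolding S_def by auto
      then have "p (x + y) \<le> g (x + y) (t1 + t2, c)" by (rule ple)
      also have "\<dots> = norm ((x - t1 *\<^sub>R (c1 - z)) + (y - t2 *\<^sub>R (c2 - z))) - (t1 + t2) * d"
        unfolding g_def using c(2) by (simp add: algebra_simps)
      also have "\<dots> \<le> g x w1 + g y w2"
        unfolding g_def w1' w2' using norm_triangle_ineq[of "x - t1 *\<^sub>R (c1 - z)" "y - t2 *\<^sub>R (c2 - z)"]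
        by (simp add: algebra_simps)
      finally show ?thesis .
    qed
    have "p (x + y) - g y w2 \<le> p x" if w2S: "w2 \<in> S" for w2
    proof (rule pge)
      fix w assume "w \<in> S"
      from key[OF this w2S] show "p (x + y) - g y w2 \<le> g x w" by simp
    qed
    then have "p (x + y) - p x \<le> g y w2" if "w2 \<in> S" for w2 using that by fastforce
    then have "p (x + y) - p x \<le> p y" by (intro pge) auto
    then show "p (x + y) \<le> p x + p y" by simp
  next
    fix c :: real and x assume c: "c > 0"
    have "p (c *\<^sub>R x) / c \<le> p x"
    proof (rule pge)
      fix w assume w: "w \<in> S"
      obtain t e where w': "w = (t, e)" "t \<ge> 0" "e \<in> C" using w unfolding S_def by auto
      have "(c * t, e) \<in> S" using w' c unfolding S_def by auto
      then have "p (c *\<^sub>R x) \<le> g (c *\<^sub>R x) (c * t, e)" by (rule ple)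
      also have "\<dots> = c * g x w"
      proof -
        have eq: "c *\<^sub>R x - (c * t) *\<^sub>R (e - z) = c *\<^sub>R (x - t *\<^sub>R (e - z))" by (simp add: algebra_simps)
        have "g (c *\<^sub>R x) (c * t, e) = norm (c *\<^sub>R (x - t *\<^sub>R (e - z))) - c * t * d"
          unfolding g_def by (simp only: fst_conv snd_conv eq)
        also have "\<dots> = c * (norm (x - t *\<^sub>R (e - z)) - t * d)"
          using c by (simp only: norm_scaleR abs_of_pos right_diff_distrib mult.assoc)
        finally show ?thesis unfolding g_def w' by simp
      qed
      finally show "p (c *\<^sub>R x) / c \<le> g x w" using c by (simp add: divide_simps mult.commute)
    qed
    moreover have "c * p x \<le> p (c *\<^sub>R x)"
    proof (rule pge)
      fix w assume w: "w \<in> S"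
      obtain t e where w': "w = (t, e)" "t \<ge> 0" "e \<in> C" using w unfolding S_def by auto
      have "(t / c, e) \<in> S" using w' c unfolding S_def by auto
      then have "p x \<le> g x (t / c, e)" by (rule ple)
      also have "\<dots> = g (c *\<^sub>R x) w / c"
      proof -
        have eq: "c *\<^sub>R x - t *\<^sub>R (e - z) = c *\<^sub>R (x - (t / c) *\<^sub>R (e - z))" using c by (simp add: algebra_simps)
        have "g (c *\<^sub>R x) w = norm (c *\<^sub>R (x - (t / c) *\<^sub>R (e - z))) - t * d"
          unfolding g_def w' by (simp only: fst_conv snd_conv eq)
        also have "\<dots> = c * (norm (x - (t / c) *\<^sub>R (e - z)) - (t / c) * d)"
          using c by (simp add: norm_scaleR right_diff_distrib)
        finally show ?thesis unfolding g_def using c by simp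
      qed
      finally show "c * p x \<le> g (c *\<^sub>R x) w" using c by (simp add: divide_simps mult.commute)
    qed
    ultimately show "p (c *\<^sub>R x) = c * p x"
      using c by (simp add: divide_simps mult.commute)
  qed
  obtain f where fadd: "\<And>x y. f (x + y) = f x + f y" and fsc: "\<And>c x. f (c *\<^sub>R x) = c * f x"
    and fp: "\<And>x. f x \<le> p x"
    using sublin_dominated_linear[OF sp] by blast
  obtain c0 where c0: "c0 \<in> C" using ne by blast
  have fn: "f v \<le> norm v" for v
  proof -
    have "(0, c0) \<in> S" using c0 unfolding S_def by auto
    then have "p v \<le> g v (0, c0)" by (rule ple)
    then show ?thesis using fp[of v] unfolding g_def by simp
  qed
  have fabs: "\<bar>f v\<bar> \<le> norm v" for v
    using fn[of v] fn[of "-v"] fsc[of "-1" v] by (simp add: abs_le_iff)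
  have bl: "bounded_linear f"
    by (rule bounded_linear_intro[where K=1]) (use fadd fsc fabs in auto)
  have "f c \<le> f z - d" if c: "c \<in> C" for c
  proof -
    have "(1, c) \<in> S" using c unfolding S_def by auto
    then have "p (c - z) \<le> g (c - z) (1, c)" by (rule ple)
    then have "f (c - z) \<le> - d" using fp[of "c - z"] unfolding g_def by simp
    moreover have "f (c - z) = f c - f z" using linear_diff[OF bounded_linear.linear[OF bl]] by simp
    ultimately show ?thesis by simp
  qed
  then show ?thesis using bl fabs by blast
qed

lemma separation_closed:
  fixes C :: "'a::real_normed_vector set"
  assumes "convex C" "closed C" "z \<notin> C"
  shows "\<exists>(f::'a \<Rightarrow> real) d. bounded_linear f \<and> d > 0 \<and> (\<forall>c\<in>C. f c + d \<le> f z)"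
proof (cases "C = {}")
  case True
  then show ?thesis using bounded_linear_zero zero_less_one by blast
next
  case False
  have d: "infdist z C > 0"
    using assms False in_closed_iff_infdist_zero infdist_nonneg by (metis less_eq_real_def)
  have "infdist z C \<le> norm (c - z)" if "c \<in> C" for c
    using infdist_le[OF that, of z] by (simp add: dist_norm norm_minus_commute)
  then obtain f :: "'a \<Rightarrow> real" where "bounded_linear f" "\<forall>c\<in>C. f c \<le> f z - infdist z C"
    using separation_aux[OF assms(1) False] by blast
  moreover have "\<forall>c\<in>C. f c + infdist z C \<le> f z" using calculation(2) by force
  ultimately show ?thesis using d by blast
qed

lemma norming_functional:
  fixes x :: "'a::real_normed_vector"
  shows "\<exists>f::'a \<Rightarrow> real. bounded_linear f \<and> (\<forall>v. \<bar>f v\<bar> \<le> norm v) \<and> f x = norm x"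
proof -
  obtain f where f: "bounded_linear f" "\<forall>v. \<bar>f v\<bar> \<le> norm v" "\<forall>c\<in>{0}. f c \<le> f x - norm x"
    using separation_aux[of "{0}" "norm x" x] by auto
  have "f 0 = 0" using linear_0[OF bounded_linear.linear[OF f(1)]] .
  then have "f x \<ge> norm x" using f(3) by auto
  moreover have "f x \<le> norm x" using f(2) by (metis abs_le_iff)
  ultimately show ?thesis using f by auto
qed

lemma weak_topspace [simp]: "topspace (weak_topology :: 'a::real_normed_vector topology) = UNIV"
proof -
  have "(UNIV::'a set) \<in> {f -` U | f U. bounded_linear (f :: 'a \<Rightarrow> real) \<and> open U}"
    by (rule CollectI, rule exI[of _ "\<lambda>_. 0"], rule exI[of _ UNIV]) (auto intro: bounded_linear_zero)
  then show ?thesis unfolding weak_topology_def by auto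
qed

lemma weak_open_basis:
  fixes f :: "'a::real_normed_vector \<Rightarrow> real"
  assumes "bounded_linear f" "open U"
  shows "openin weak_topology (f -` U)"
  unfolding weak_topology_def by (rule topology_generated_by_Basis) (use assms in blast)

lemma weak_open_imp_open:
  assumes "openin (weak_topology :: 'a::real_normed_vector topology) U"
  shows "open U"
proof -
  have "generate_topology_on {f -` U | f U. bounded_linear (f :: 'a \<Rightarrow> real) \<and> open U} U"
    using assms unfolding weak_topology_def openin_topology_generated_by_iff .
  then show ?thesis
  proof induction
    case (Basis s)
    then obtain f V where "s = f -` V" "bounded_linear (f :: 'a \<Rightarrow> real)" "open V" by blast
    then show ?case
      using continuous_open_vimage linear_continuous_at by blast
  qed auto
qed

lemma weak_continuous:
  fixes f :: "'a::real_normed_vector \<Rightarrow> real"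
  assumes "bounded_linear f"
  shows "continuous_map weak_topology euclidean f"
  unfolding continuous_map_def using weak_open_basis[OF assms] by (auto simp: vimage_def)

lemma closed_convex_weakly_closed:
  fixes C :: "'a::real_normed_vector set"
  assumes "closed C" "convex C"
  shows "closedin weak_topology C"
proof -
  have "openin weak_topology (- C)"
  proof (rule openin_subopen[THEN iffD2], intro ballI)
    fix z assume "z \<in> - C"
    then have "z \<notin> C" by simp
    then obtain f :: "'a \<Rightarrow> real" and d where f: "bounded_linear f" "d > 0" "\<forall>c\<in>C. f c + d \<le> f z"
      using separation_closed[OF assms(2,1)] by blast
    show "\<exists>T. openin weak_topology T \<and> z \<in> T \<and> T \<subseteq> - C"
    proof (intro exI conjI)
      show "openin weak_topology (f -` {f z - d <..})"
        by (rule weak_open_basis[OF f(1)]) simp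
      show "z \<in> f -` {f z - d <..}" using f(2) by simp
      show "f -` {f z - d <..} \<subseteq> - C" using f(3) by force
    qed
  qed
  then show ?thesis unfolding closedin_def by (simp add: Compl_eq_Diff_UNIV)
qed

lemma weak_Hausdorff: "Hausdorff_space (weak_topology :: 'a::real_normed_vector topology)"
  unfolding Hausdorff_space_def
proof (intro allI impI)
  fix x y :: 'a assume "x \<in> topspace weak_topology \<and> y \<in> topspace weak_topology \<and> x \<noteq> y"
  then have "y \<notin> {x}" by auto
  then obtain f :: "'a \<Rightarrow> real" and d where f: "bounded_linear f" "d > 0" "f x + d \<le> f y"
    using separation_closed[of "{x}" y] by auto
  show "\<exists>U V. openin weak_topology U \<and> openin weak_topology V \<and> x \<in> U \<and> y \<in> V \<and> disjnt U V"
  proof (intro exI conjI)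
    show "openin weak_topology (f -` {..< f x + d/2})" by (rule weak_open_basis[OF f(1)]) simp
    show "openin weak_topology (f -` {f x + d/2 <..})" by (rule weak_open_basis[OF f(1)]) simp
    show "x \<in> f -` {..< f x + d/2}" using f by simp
    show "y \<in> f -` {f x + d/2 <..}" using f by simp
    show "disjnt (f -` {..< f x + d/2}) (f -` {f x + d/2 <..})" by (auto simp: disjnt_def)
  qed
qed

lemma weakly_compact_closed:
  fixes K :: "'a::real_normed_vector set"
  assumes "weakly_compact K" shows "closed K"
proof -
  have "closedin weak_topology K"
    using compactin_imp_closedin[OF weak_Hausdorff] assms unfolding weakly_compact_def by blast
  then have "open (- K)" using weak_open_imp_open unfolding closedin_def by (simp add: Compl_eq_Diff_UNIV)
  then show ?thesis by (simp add: closed_def)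
qed

lemma weakly_compact_closed_convex_subset:
  fixes K C :: "'a::real_normed_vector set"
  assumes "weakly_compact K" "C \<subseteq> K" "closed C" "convex C"
  shows "weakly_compact C"
  using closed_compactin[of weak_topology K C] assms closed_convex_weakly_closed
  unfolding weakly_compact_def by blast

lemma weakly_compact_functional_bounded:
  fixes K :: "'a::real_normed_vector set" and f :: "'a \<Rightarrow> real"
  assumes "weakly_compact K" "bounded_linear f"
  shows "bounded (f ` K)"
proof -
  have "compactin euclidean (f ` K)"
    using image_compactin[OF _ weak_continuous[OF assms(2)]] assms(1) unfolding weakly_compact_def by blast
  then show ?thesis using compact_imp_bounded by auto
qed

lemma weakly_compact_bounded:
  fixes K :: "'a::banach set"
  assumes wK: "weakly_compact K"
  shows "bounded K"
proof -
  define F where "F = (\<lambda>n::nat. {g :: 'a \<Rightarrow>\<^sub>L real. \<forall>x\<in>K. \<bar>blinfun_apply g x\<bar> \<le> real n})"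
  have clF: "closed (F n)" for n
  proof -
    have "F n = (\<Inter>x\<in>K. {g :: 'a \<Rightarrow>\<^sub>L real. \<bar>blinfun_apply g x\<bar> \<le> real n})"
      unfolding F_def by auto
    moreover have "closed {g :: 'a \<Rightarrow>\<^sub>L real. \<bar>blinfun_apply g x\<bar> \<le> real n}" for x
    proof (rule closed_Collect_le)
      have "continuous_on UNIV (\<lambda>g :: 'a \<Rightarrow>\<^sub>L real. blinfun_apply g x)"
        by (rule linear_continuous_on[OF blinfun.bounded_linear_left])
      then show "continuous_on UNIV (\<lambda>g :: 'a \<Rightarrow>\<^sub>L real. \<bar>blinfun_apply g x\<bar>)"
        by (intro continuous_intros)
    qed simp
    ultimately show ?thesis by auto
  qed
  have cover: "\<Union>(range F) = UNIV"
  proof -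
    have "\<exists>n. g \<in> F n" for g
    proof -
      have "bounded ((blinfun_apply g) ` K)"
        by (rule weakly_compact_functional_bounded[OF wK]) (rule blinfun.bounded_linear_right)
      then obtain B where B: "\<forall>x\<in>K. \<bar>blinfun_apply g x\<bar> \<le> B"
        unfolding bounded_iff by auto
      obtain n :: nat where "B \<le> real n" using real_arch_simple by blast
      then have "\<forall>x\<in>K. \<bar>blinfun_apply g x\<bar> \<le> real n" using B by force
      then show ?thesis unfolding F_def by blast
    qed
    then show ?thesis by auto
  qed
  have "\<exists>n. euclidean interior_of (F n) \<noteq> {}"
  proof (rule ccontr)
    assume "\<not> ?thesis"
    then have ie: "euclidean interior_of (F m) = {}" for m by blast
    have "euclidean interior_of \<Union>(range F) = {}"
    proof (rule Baire_category_alt)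
      show "completely_metrizable_space (euclidean :: ('a \<Rightarrow>\<^sub>L real) topology) \<or> locally_compact_space (euclidean :: ('a \<Rightarrow>\<^sub>L real) topology) \<and> regular_space (euclidean :: ('a \<Rightarrow>\<^sub>L real) topology)"
        using completely_metrizable_space_euclidean by blast
      show "countable (range F)" by simp
      fix T assume "T \<in> range F"
      then obtain m where "T = F m" by blast
      then show "closedin euclidean T \<and> euclidean interior_of T = {}"
        using clF[of m] ie[of m] closed_closedin by blast
    qed
    then show False using cover by simp
  qed
  then obtain n where n: "euclidean interior_of (F n) \<noteq> {}" by blast
  have "\<exists>T. openin euclidean T \<and> T \<subseteq> F n \<and> T \<noteq> {}"
    using n unfolding interior_of_eq_empty by blast
  then obtain T where T0: "openin euclidean T" "T \<subseteq> F n" "T \<noteq> {}"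
    by blast
  have T: "open T" "T \<subseteq> F n" "T \<noteq> {}" using T0 open_openin by blast+
  then obtain g0 where "g0 \<in> T" by auto
  then obtain r where r: "r > 0" "ball g0 r \<subseteq> T" using T(1) by (meson open_contains_ball)
  have "norm x \<le> 4 * real n / r" if x: "x \<in> K" for x
  proof -
    obtain f :: "'a \<Rightarrow> real" where f: "bounded_linear f" "\<forall>v. \<bar>f v\<bar> \<le> norm v" "f x = norm x"
      using norming_functional by blast
    define h where "h = Blinfun (\<lambda>v. (r / 2) * f v)"
    have bh: "bounded_linear (\<lambda>v. (r / 2) * f v)"
      by (rule bounded_linear_compose[OF bounded_linear_mult_right f(1)])
    have happ: "blinfun_apply h v = (r / 2) * f v" for v
      unfolding h_def using bounded_linear_Blinfun_apply[OF bh] by simp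
    have "norm h \<le> r / 2"
    proof (rule norm_blinfun_bound)
      show "0 \<le> r / 2" using r by simp
      fix v
      have "\<bar>(r / 2) * f v\<bar> \<le> (r / 2) * norm v"
        using f(2)[rule_format, of v] r by (simp add: abs_mult mult_left_mono)
      then show "norm (blinfun_apply h v) \<le> r / 2 * norm v" by (simp only: happ real_norm_def)
    qed
    then have "g0 + h \<in> ball g0 r" using r by (simp add: dist_norm)
    then have "g0 + h \<in> F n" "g0 \<in> F n" using r T \<open>g0 \<in> T\<close> by auto
    then have "\<bar>blinfun_apply (g0 + h) x\<bar> \<le> real n" "\<bar>blinfun_apply g0 x\<bar> \<le> real n"
      using x unfolding F_def by auto
    then have "\<bar>blinfun_apply h x\<bar> \<le> 2 * real n" by (simp add: blinfun.add_left)
    then have "(r / 2) * norm x \<le> 2 * real n" using happ f(3) r by simp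
    then show ?thesis using r by (simp add: field_simps)
  qed
  then show ?thesis unfolding bounded_iff by blast
qed

lemma rad_bdd:
  fixes S :: "'a::real_normed_vector set"
  assumes "bounded S" shows "bdd_above ((\<lambda>y. norm (x - y)) ` S)"
proof -
  obtain B where B: "\<forall>y\<in>S. norm y \<le> B" using assms unfolding bounded_iff by auto
  show ?thesis
  proof (rule bdd_aboveI2[where M="norm x + B"])
    fix y assume "y \<in> S"
    then show "norm (x - y) \<le> norm x + B" using B norm_triangle_ineq4[of x y] by force
  qed
qed

lemma rad_le_iff:
  fixes S :: "'a::real_normed_vector set"
  assumes "bounded S" "S \<noteq> {}"
  shows "rad x S \<le> c \<longleftrightarrow> (\<forall>y\<in>S. norm (x - y) \<le> c)"
  unfolding rad_def using cSUP_le_iff[OF assms(2) rad_bdd[OF assms(1)]] by blast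

lemma rad_ge:
  fixes S :: "'a::real_normed_vector set"
  assumes "bounded S" "y \<in> S"
  shows "norm (x - y) \<le> rad x S"
  unfolding rad_def by (rule cSUP_upper[OF assms(2) rad_bdd[OF assms(1)]])

lemma rad_closure_hull:
  fixes S :: "'a::real_normed_vector set"
  assumes "bounded S" "S \<noteq> {}"
  shows "rad x (closure (convex hull S)) = rad x S"
proof -
  have bC: "bounded (closure (convex hull S))"
    using assms(1) by (intro bounded_closure bounded_convex_hull)
  have neC: "closure (convex hull S) \<noteq> {}" using assms(2) by simp
  have SC: "S \<subseteq> closure (convex hull S)"
    using closure_subset[of "convex hull S"] hull_subset[of S convex] by (rule subset_trans[rotated])
  have "closure (convex hull S) \<subseteq> cball x (rad x S)"
  proof (rule closure_minimal)
    show "convex hull S \<subseteq> cball x (rad x S)"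
    proof (rule hull_minimal)
      show "S \<subseteq> cball x (rad x S)"
      proof
        fix y assume "y \<in> S"
        then have "norm (x - y) \<le> rad x S" by (rule rad_ge[OF assms(1)])
        then show "y \<in> cball x (rad x S)" by (simp add: dist_norm)
      qed
    qed (rule convex_cball)
  qed (rule closed_cball)
  then have "rad x (closure (convex hull S)) \<le> rad x S"
    unfolding rad_le_iff[OF bC neC] by (simp add: subset_iff dist_norm)
  moreover have "rad x S \<le> rad x (closure (convex hull S))"
    unfolding rad_le_iff[OF assms] using rad_ge[OF bC] SC by (meson subsetD)
  ultimately show ?thesis by simp
qed

lemma finite_chain_min:
  assumes "finite F" "F \<noteq> {}" "\<And>a b. a \<in> F \<Longrightarrow> b \<in> F \<Longrightarrow> a \<subseteq> b \<or> b \<subseteq> a"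
  shows "\<exists>m\<in>F. \<forall>b\<in>F. m \<subseteq> b"
  using assms
proof (induction F rule: finite_ne_induct)
  case (singleton x)
  then show ?case by auto
next
  case (insert x F)
  have "\<And>a b. a \<in> F \<Longrightarrow> b \<in> F \<Longrightarrow> a \<subseteq> b \<or> b \<subseteq> a" using insert.prems by blast
  then obtain m where m: "m \<in> F" "\<forall>b\<in>F. m \<subseteq> b" using insert.IH by blast
  have "x \<subseteq> m \<or> m \<subseteq> x" using insert.prems m(1) by blast
  then show ?case
  proof
    assume "x \<subseteq> m" then show ?thesis using m by blast
  next
    assume "m \<subseteq> x" then show ?thesis using m by blast
  qed
qed

lemma fpp_from_wns:
  fixes K :: "'a::banach set"
  assumes wns: "weak_normal_structure TYPE('a)"
    and nt: "nontrivial K" and wK: "weakly_compact K" and cK: "convex K"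
    and TK: "T ` K \<subseteq> K" and dim: "diminishes_radius T K"
  shows "\<exists>x\<in>K. T x = x"
proof -
  have bK: "bounded K" by (rule weakly_compact_bounded[OF wK])
  have clK: "closed K" by (rule weakly_compact_closed[OF wK])
  have neK: "K \<noteq> {}" using nt unfolding nontrivial_def by auto
  have nsK: "normal_structure K" using wns nt wK cK unfolding weak_normal_structure_def by blast
  define A where "A = {M. M \<subseteq> K \<and> M \<noteq> {} \<and> closed M \<and> convex M \<and> T ` M \<subseteq> M}"
  define P where "P = (\<lambda>M M' :: 'a set. M' \<subseteq> M)"
  have po: "partial_order_on A (relation_of P A)"
    unfolding partial_order_on_def preorder_on_def refl_on_def trans_def antisym_def relation_of_def P_def
    by auto
  have KA: "K \<in> A" unfolding A_def using neK clK cK TK by auto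
  have ch: "\<exists>u \<in> A. \<forall>a \<in> C. P a u" if C: "C \<in> Chains (relation_of P A)" for C
  proof (cases "C = {}")
    case True
    then show ?thesis using KA by auto
  next
    case False
    have CA: "C \<subseteq> A" using C unfolding Chains_def relation_of_def by blast
    have cmp: "a \<subseteq> b \<or> b \<subseteq> a" if "a \<in> C" "b \<in> C" for a b
      using C that unfolding Chains_def relation_of_def P_def by blast
    have "K \<inter> \<Inter>C \<noteq> {}"
    proof -
      have "compactin weak_topology K" using wK unfolding weakly_compact_def .
      moreover have "\<forall>M\<in>C. closedin weak_topology M"
        using CA closed_convex_weakly_closed unfolding A_def by blast
      moreover have "K \<inter> \<Inter>F \<noteq> {}" if "finite F" "F \<subseteq> C" for F
      proof (cases "F = {}")
        case True then show ?thesis using neK by simp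
      next
        case False
        obtain m where m: "m \<in> F" "\<forall>b\<in>F. m \<subseteq> b"
          using finite_chain_min[OF \<open>finite F\<close> False] cmp \<open>F \<subseteq> C\<close> by blast
        have "m \<subseteq> K" "m \<noteq> {}" using m(1) \<open>F \<subseteq> C\<close> CA unfolding A_def by auto
        then show ?thesis using m by blast
      qed
      ultimately show ?thesis unfolding compactin_fip by blast
    qed
    moreover have "\<Inter>C \<subseteq> K" using False CA unfolding A_def by blast
    ultimately have ne: "\<Inter>C \<noteq> {}" by blast
    have "closed (\<Inter>C)" using CA unfolding A_def by (intro closed_Inter) blast
    moreover have "convex (\<Inter>C)" using CA unfolding A_def by (intro convex_Inter) blast
    moreover have "T ` \<Inter>C \<subseteq> \<Inter>C" using CA unfolding A_def by blast
    ultimately have "\<Inter>C \<in> A" using ne \<open>\<Inter>C \<subseteq> K\<close> unfolding A_def by blast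
    moreover have "\<forall>a\<in>C. P a (\<Inter>C)" unfolding P_def by blast
    ultimately show ?thesis by blast
  qed
  obtain M where MA: "M \<in> A" and Mmin: "\<And>a. a \<in> A \<Longrightarrow> a \<subseteq> M \<Longrightarrow> a = M"
    using predicate_Zorn[OF po ch] unfolding P_def by blast
  have MK: "M \<subseteq> K" and neM: "M \<noteq> {}" and clM: "closed M" and cM: "convex M" and TM: "T ` M \<subseteq> M"
    using MA unfolding A_def by auto
  have bM: "bounded M" using bK MK bounded_subset by blast
  have bTM: "bounded (T ` M)" using bM TM bounded_subset by blast
  have neTM: "T ` M \<noteq> {}" using neM by simp
  have hullM: "closure (convex hull (T ` M)) = M"
  proof (rule Mmin)
    have sub: "closure (convex hull (T ` M)) \<subseteq> M"
      by (rule closure_minimal[OF hull_minimal[of "T ` M" M convex, OF TM cM] clM])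
    moreover have "T ` closure (convex hull (T ` M)) \<subseteq> closure (convex hull (T ` M))"
      using sub closure_subset hull_subset by fastforce
    ultimately show "closure (convex hull (T ` M)) \<in> A"
      unfolding A_def using MK neTM convex_closure convex_convex_hull by auto
    show "closure (convex hull (T ` M)) \<subseteq> M" by (rule sub)
  qed
  have radT: "rad (T x) M \<le> rad x M" if "x \<in> M" for x
  proof -
    have "rad (T x) M = rad (T x) (T ` M)"
      using rad_closure_hull[OF bTM neTM] hullM by simp
    also have "\<dots> \<le> rad x M"
      using dim MK cM TM that unfolding diminishes_radius_def by blast
    finally show ?thesis .
  qed
  show ?thesis
  proof (cases "\<exists>a\<in>M. \<exists>b\<in>M. a \<noteq> b")
    case False
    obtain p where "p \<in> M" using neM by blast
    then have "T p = p" using False TM by blast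
    then show ?thesis using \<open>p \<in> M\<close> MK by blast
  next
    case True
    then obtain a b where ab: "a \<in> M" "b \<in> M" "a \<noteq> b" by blast
    have "0 < dist a b" using ab by simp
    also have "dist a b \<le> diameter M" by (rule diameter_bounded_bound[OF bM ab(1,2)])
    finally have dpos: "diameter M > 0" .
    obtain x0 where x0: "x0 \<in> M" "rad x0 M < diameter M"
      using nsK MK clM cM dpos unfolding normal_structure_def by blast
    define c where "c = rad x0 M"
    define Mc where "Mc = M \<inter> (\<Inter>y\<in>M. cball y c)"
    have Mc_eq: "Mc = {x\<in>M. rad x M \<le> c}"
      unfolding Mc_def using rad_le_iff[OF bM neM] by (auto simp: dist_norm norm_minus_commute)
    have "Mc \<in> A"
    proof -
      have "x0 \<in> Mc" unfolding Mc_eq c_def using x0 by simp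
      moreover have "closed Mc" unfolding Mc_def using clM by (intro closed_Int closed_INT) auto
      moreover have "convex Mc" unfolding Mc_def using cM by (intro convex_Int convex_INT) auto
      moreover have "T ` Mc \<subseteq> Mc"
      proof
        fix z assume "z \<in> T ` Mc"
        then obtain x where x: "x \<in> Mc" "z = T x" by blast
        then have "x \<in> M" "rad x M \<le> c" unfolding Mc_eq by auto
        then show "z \<in> Mc" unfolding Mc_eq using radT[of x] TM x(2) by force
      qed
      ultimately show ?thesis unfolding A_def using MK unfolding Mc_def by blast
    qed
    then have "Mc = M" by (rule Mmin) (auto simp: Mc_def)
    then have "\<forall>x\<in>M. rad x M \<le> c" unfolding Mc_eq by blast
    then have "\<forall>x\<in>M. \<forall>y\<in>M. norm (x - y) \<le> c" using rad_le_iff[OF bM neM] by blast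
    then have "diameter M \<le> c" using neM by (intro diameter_le) auto
    then show ?thesis using x0 unfolding c_def by simp
  qed
qed

definition stage :: "'a::real_normed_vector set \<Rightarrow> real \<Rightarrow> nat \<Rightarrow> 'a set \<Rightarrow> 'a set" where
  "stage K0 \<delta> n F = (SOME Y. finite Y \<and> Y \<subseteq> K0 - F \<and> Y \<noteq> {} \<and>
      (\<forall>x\<in>convex hull F. \<exists>y\<in>Y. \<delta> - inverse (real (Suc n)) < norm (x - y)))"

primrec Gs :: "'a::real_normed_vector set \<Rightarrow> real \<Rightarrow> 'a \<Rightarrow> nat \<Rightarrow> 'a set" where
  "Gs K0 \<delta> a 0 = {a}"
| "Gs K0 \<delta> a (Suc n) = Gs K0 \<delta> a n \<union> stage K0 \<delta> n (Gs K0 \<delta> a n)"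

context
  fixes K0 :: "'a::banach set" and \<delta> :: real
  assumes clK0: "closed K0" and cK0: "convex K0" and bK0: "bounded K0"
    and dK0: "diameter K0 = \<delta>" and dpos: "\<delta> > 0"
    and diam: "\<And>x. x \<in> K0 \<Longrightarrow> \<delta> \<le> rad x K0"
begin

lemma K0_ne: "K0 \<noteq> {}"
  using dK0 dpos by (auto simp: diameter_def)

lemma far_new:
  assumes x: "x \<in> K0" and e: "e > 0" and F: "finite F"
  shows "\<exists>y\<in>K0 - F. \<delta> - e < norm (x - y)"
proof -
  have "\<delta> - e < rad x K0" using diam[OF x] e by simp
  then obtain y0 where y0: "y0 \<in> K0" "\<delta> - e < norm (x - y0)"
    unfolding rad_def using less_cSUP_iff[OF K0_ne rad_bdd[OF bK0]] by blast
  obtain z where z: "z \<in> K0" "z \<noteq> y0"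
  proof (rule ccontr)
    assume "\<not> thesis"
    then have "\<forall>z\<in>K0. z = y0" using that by blast
    then have "\<forall>x\<in>K0. \<forall>y\<in>K0. norm (x - y) \<le> 0" by (metis order_refl diff_self norm_zero)
    then have "diameter K0 \<le> 0" by (intro diameter_le) auto
    then show False using dK0 dpos by simp
  qed
  define g where "g = norm (x - y0) - (\<delta> - e)"
  have gpos: "g > 0" using y0 unfolding g_def by simp
  define \<eta> where "\<eta> = min 1 (g / (norm (z - y0) + 1))"
  have etapos: "\<eta> > 0" using gpos unfolding \<eta>_def by (simp add: add_nonneg_pos divide_pos_pos)
  define yt where "yt = (\<lambda>t::real. y0 + t *\<^sub>R (z - y0))"
  have inj: "inj yt" unfolding yt_def inj_def using z(2) by auto
  have "infinite (yt ` {0<..<\<eta>})"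
  proof
    assume "finite (yt ` {0<..<\<eta>})"
    then have "finite {0<..<\<eta>}" using finite_imageD inj_on_subset[OF inj] by blast
    then show False using infinite_Ioo[OF etapos] by blast
  qed
  then have "\<not> (yt ` {0<..<\<eta>} \<subseteq> F)" using F finite_subset by blast
  then obtain t where t: "t \<in> {0<..<\<eta>}" "yt t \<notin> F" by blast
  have t1: "0 \<le> t" "t \<le> 1" using t unfolding \<eta>_def by auto
  have "yt t = (1 - t) *\<^sub>R y0 + t *\<^sub>R z" unfolding yt_def by (simp add: algebra_simps)
  then have ytK: "yt t \<in> K0" using convexD_alt[OF cK0 y0(1) z(1)] t1 by simp
  have "t * norm (z - y0) \<le> \<eta> * norm (z - y0)" using t by (intro mult_right_mono) auto
  also have "\<dots> \<le> g / (norm (z - y0) + 1) * norm (z - y0)"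
    unfolding \<eta>_def by (intro mult_right_mono) auto
  also have "\<dots> < g"
  proof -
    have "g * norm (z - y0) < g * (norm (z - y0) + 1)" using gpos by simp
    moreover have "norm (z - y0) + 1 > 0" by (simp add: add_nonneg_pos)
    ultimately show ?thesis by (simp add: divide_simps)
  qed
  finally have tg: "t * norm (z - y0) < g" .
  have "norm (x - y0) \<le> norm (x - yt t) + norm (t *\<^sub>R (z - y0))"
    using norm_triangle_ineq[of "x - yt t" "t *\<^sub>R (z - y0)"] unfolding yt_def by (simp add: algebra_simps)
  also have "norm (t *\<^sub>R (z - y0)) = t * norm (z - y0)" using t1 by simp
  finally have "\<delta> - e < norm (x - yt t)" using tg unfolding g_def by simp
  then show ?thesis using ytK t(2) by blast
qed

lemma stage_exists:
  assumes F: "finite F" "F \<subseteq> K0" "F \<noteq> {}" and e: "e > 0"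
  shows "\<exists>Y. finite Y \<and> Y \<subseteq> K0 - F \<and> Y \<noteq> {} \<and> (\<forall>x\<in>convex hull F. \<exists>y\<in>Y. \<delta> - e < norm (x - y))"
proof -
  have hK: "convex hull F \<subseteq> K0" by (rule hull_minimal[of F K0 convex, OF F(2) cK0])
  have cpt: "compact (convex hull F)" by (rule finite_imp_compact_convex_hull[OF F(1)])
  define U where "U = (\<lambda>y::'a. {x::'a. \<delta> - e < norm (x - y)})"
  have opn: "open (U y)" for y
    unfolding U_def by (intro open_Collect_less continuous_intros)
  have cov: "convex hull F \<subseteq> (\<Union>y\<in>K0 - F. U y)"
  proof
    fix x assume "x \<in> convex hull F"
    then have "x \<in> K0" using hK by blast
    then obtain y where "y \<in> K0 - F" "\<delta> - e < norm (x - y)" using far_new[OF _ e F(1)] by blast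
    then show "x \<in> (\<Union>y\<in>K0 - F. U y)" unfolding U_def by blast
  qed
  obtain Y where Y: "Y \<subseteq> K0 - F" "finite Y" "convex hull F \<subseteq> (\<Union>y\<in>Y. U y)"
    using compactE_image[OF cpt opn cov] by blast
  have "Y \<noteq> {}" using Y(3) F(3) hull_subset[of F convex] by auto
  moreover have "\<forall>x\<in>convex hull F. \<exists>y\<in>Y. \<delta> - e < norm (x - y)" using Y(3) unfolding U_def by blast
  ultimately show ?thesis using Y by blast
qed


lemma stage_spec:
  assumes "finite F" "F \<subseteq> K0" "F \<noteq> {}"
  shows "finite (stage K0 \<delta> n F) \<and> stage K0 \<delta> n F \<subseteq> K0 - F \<and> stage K0 \<delta> n F \<noteq> {} \<and>
    (\<forall>x\<in>convex hull F. \<exists>y\<in>stage K0 \<delta> n F. \<delta> - inverse (real (Suc n)) < norm (x - y))"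
  unfolding stage_def by (rule someI_ex) (rule stage_exists[OF assms], simp)

lemma Gs_props:
  assumes a: "a \<in> K0"
  shows "finite (Gs K0 \<delta> a n) \<and> Gs K0 \<delta> a n \<subseteq> K0 \<and> Gs K0 \<delta> a n \<noteq> {}"
proof (induction n)
  case 0
  then show ?case using a by simp
next
  case (Suc n)
  then have "finite (Gs K0 \<delta> a n)" "Gs K0 \<delta> a n \<subseteq> K0" "Gs K0 \<delta> a n \<noteq> {}" by auto
  from stage_spec[OF this, of n] Suc.IH show ?case by (simp add: Un_subset_iff) blast
qed

lemma Gs_mono:
  assumes "m \<le> n" shows "Gs K0 \<delta> a m \<subseteq> Gs K0 \<delta> a n"
  by (rule lift_Suc_mono_le[of "Gs K0 \<delta> a", OF _ assms]) auto

lemma Gs_card: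
  assumes a: "a \<in> K0"
  shows "n \<le> card (Gs K0 \<delta> a n)"
proof (induction n)
  case 0 then show ?case by simp
next
  case (Suc n)
  have P: "finite (Gs K0 \<delta> a n)" "Gs K0 \<delta> a n \<subseteq> K0" "Gs K0 \<delta> a n \<noteq> {}" using Gs_props[OF a] by auto
  have S: "finite (stage K0 \<delta> n (Gs K0 \<delta> a n))" "stage K0 \<delta> n (Gs K0 \<delta> a n) \<subseteq> K0 - Gs K0 \<delta> a n"
     "stage K0 \<delta> n (Gs K0 \<delta> a n) \<noteq> {}"
    using stage_spec[OF P] by auto
  have "Gs K0 \<delta> a n \<subset> Gs K0 \<delta> a (Suc n)" using S by auto
  moreover have "finite (Gs K0 \<delta> a (Suc n))" using P S by simp
  ultimately have "card (Gs K0 \<delta> a n) < card (Gs K0 \<delta> a (Suc n))" by (rule psubset_card_mono[rotated])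
  then show ?case using Suc.IH by simp
qed

lemma Gs_finite_subset:
  assumes "finite F" "F \<subseteq> (\<Union>n. Gs K0 \<delta> a n)"
  shows "\<exists>N. F \<subseteq> Gs K0 \<delta> a N"
  using assms
proof (induction F rule: finite_induct)
  case empty then show ?case by simp
next
  case (insert y F)
  then obtain N where N: "F \<subseteq> Gs K0 \<delta> a N" by auto
  obtain n1 where n1: "y \<in> Gs K0 \<delta> a n1" using insert.prems by auto
  have "insert y F \<subseteq> Gs K0 \<delta> a (max N n1)"
    using N n1 Gs_mono[of N "max N n1" a] Gs_mono[of n1 "max N n1" a] by auto
  then show ?case by blast
qed

lemma Gs_hull:
  "convex hull (\<Union>n. Gs K0 \<delta> a n) \<subseteq> (\<Union>n. convex hull (Gs K0 \<delta> a n))"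
proof (rule hull_minimal)
  show "(\<Union>n. Gs K0 \<delta> a n) \<subseteq> (\<Union>n. convex hull (Gs K0 \<delta> a n))"
  proof
    fix y assume "y \<in> (\<Union>n. Gs K0 \<delta> a n)"
    then obtain n where "y \<in> Gs K0 \<delta> a n" by blast
    then have "y \<in> convex hull (Gs K0 \<delta> a n)" using hull_subset[of "Gs K0 \<delta> a n" convex] by (rule subsetD[rotated])
    then show "y \<in> (\<Union>n. convex hull (Gs K0 \<delta> a n))" by blast
  qed
  show "convex (\<Union>n. convex hull (Gs K0 \<delta> a n))"
  proof (rule convexI)
    fix x y and u v :: real assume x: "x \<in> (\<Union>n. convex hull (Gs K0 \<delta> a n))" and y: "y \<in> (\<Union>n. convex hull (Gs K0 \<delta> a n))"
      and uv: "0 \<le> u" "0 \<le> v" "u + v = 1"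
    obtain n1 where n1: "x \<in> convex hull (Gs K0 \<delta> a n1)" using x by blast
    obtain n2 where n2: "y \<in> convex hull (Gs K0 \<delta> a n2)" using y by blast
    have "x \<in> convex hull (Gs K0 \<delta> a (max n1 n2))"
      using n1 hull_mono[OF Gs_mono[of n1 "max n1 n2" a]] by auto
    moreover have "y \<in> convex hull (Gs K0 \<delta> a (max n1 n2))"
      using n2 hull_mono[OF Gs_mono[of n2 "max n1 n2" a]] by auto
    ultimately have "u *\<^sub>R x + v *\<^sub>R y \<in> convex hull (Gs K0 \<delta> a (max n1 n2))"
      using convexD[OF convex_convex_hull] uv by blast
    then show "u *\<^sub>R x + v *\<^sub>R y \<in> (\<Union>n. convex hull (Gs K0 \<delta> a n))" by blast
  qed
qed

lemma Gs_far:
  assumes a: "a \<in> K0" and x: "x \<in> closure (convex hull (\<Union>n. Gs K0 \<delta> a n))" and e: "e > 0"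
    and F: "finite F" "F \<subseteq> (\<Union>n. Gs K0 \<delta> a n)"
  shows "\<exists>y\<in>(\<Union>n. Gs K0 \<delta> a n) - F. \<delta> - e < norm (x - y)"
proof -
  obtain x' where x': "x' \<in> convex hull (\<Union>n. Gs K0 \<delta> a n)" "dist x' x < e / 2"
    using x e unfolding closure_approachable by (meson half_gt_zero)
  obtain M where M: "x' \<in> convex hull (Gs K0 \<delta> a M)" using x'(1) Gs_hull by blast
  obtain N1 where N1: "F \<subseteq> Gs K0 \<delta> a N1" using Gs_finite_subset[OF F] by blast
  obtain N2 where N2: "inverse (real (Suc N2)) < e / 2" using reals_Archimedean e by (meson half_gt_zero)
  define n where "n = max M (max N1 N2)"
  have P: "finite (Gs K0 \<delta> a n)" "Gs K0 \<delta> a n \<subseteq> K0" "Gs K0 \<delta> a n \<noteq> {}" using Gs_props[OF a] by auto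
  have x'n: "x' \<in> convex hull (Gs K0 \<delta> a n)"
    using M hull_mono[OF Gs_mono[of M n a]] unfolding n_def by simp blast
  obtain y where y: "y \<in> stage K0 \<delta> n (Gs K0 \<delta> a n)" "\<delta> - inverse (real (Suc n)) < norm (x' - y)"
    using stage_spec[OF P, of n] x'n by blast
  have yD: "y \<in> (\<Union>n. Gs K0 \<delta> a n)" proof -
    have "y \<in> Gs K0 \<delta> a (Suc n)" using y(1) by simp
    then show ?thesis by blast
  qed
  have "y \<notin> Gs K0 \<delta> a n" using y(1) stage_spec[OF P, of n] by blast
  moreover have "F \<subseteq> Gs K0 \<delta> a n"
  proof -
    have "N1 \<le> n" unfolding n_def by simp
    then show ?thesis using N1 Gs_mono[of N1 n a] by blast
  qed
  ultimately have yF: "y \<notin> F" by blast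
  have "inverse (real (Suc n)) \<le> inverse (real (Suc N2))"
    unfolding n_def by (intro le_imp_inverse_le) auto
  then have "\<delta> - e / 2 < norm (x' - y)" using y(2) N2 by linarith
  moreover have "norm (x' - y) \<le> norm (x - y) + norm (x' - x)"
    using norm_triangle_ineq[of "x' - x" "x - y"] by (simp add: algebra_simps)
  moreover have "norm (x' - x) < e / 2" using x'(2) by (simp add: dist_norm)
  ultimately have "\<delta> - e < norm (x - y)" by linarith
  then show ?thesis using yD yF by blast
qed


lemma diametral_no_fpp:
  assumes wK0: "weakly_compact K0"
  shows "\<exists>K' (T::'a \<Rightarrow> 'a). nontrivial K' \<and> weakly_compact K' \<and> convex K' \<and> T ` K' \<subseteq> K' \<and>
            diminishes_radius T K' \<and> (\<forall>x\<in>K'. T x \<noteq> x)"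
proof -
  obtain a where a: "a \<in> K0" using K0_ne by blast
  define D where "D = (\<Union>n. Gs K0 \<delta> a n)"
  have DK: "D \<subseteq> K0" using Gs_props[OF a] unfolding D_def by blast
  have cG: "countable (Gs K0 \<delta> a n)" for n using Gs_props[OF a] countable_finite by blast
  have cD: "countable D" unfolding D_def
    by (rule countable_UN[of UNIV]) (use cG in auto)
  have iD: "infinite D"
  proof
    assume fD: "finite D"
    have "Gs K0 \<delta> a (Suc (card D)) \<subseteq> D" unfolding D_def by blast
    then have "card (Gs K0 \<delta> a (Suc (card D))) \<le> card D" by (rule card_mono[OF fD])
    with Gs_card[OF a, of "Suc (card D)"] show False by simp
  qed
  obtain e :: "'a \<Rightarrow> nat" where e: "bij_betw e D UNIV" using countableE_infinite[OF cD iD] by blast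
  define d where "d = inv_into D e"
  have dD: "d n \<in> D" for n
    unfolding d_def using e by (metis bij_betw_def inv_into_into UNIV_I)
  have ed: "e (d n) = n" for n
    using bij_betw_inv_into_right[OF e] unfolding d_def by simp
  have de: "d (e x) = x" if "x \<in> D" for x
    using bij_betw_inv_into_left[OF e that] unfolding d_def by simp
  define K' where "K' = closure (convex hull D)"
  define T where "T = (\<lambda>x. if x \<in> D then d (Suc (e x)) else d 0)"
  have K'K0: "K' \<subseteq> K0" unfolding K'_def
    by (rule closure_minimal[OF hull_minimal[of D K0 convex, OF DK cK0] clK0])
  have bK': "bounded K'" using bounded_subset[OF bK0 K'K0] .
  have DK': "D \<subseteq> K'" unfolding K'_def
    using hull_subset[of D convex] closure_subset[of "convex hull D"] by (rule subset_trans)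
  have cK': "convex K'" unfolding K'_def by (simp add: convex_closure)
  have wK': "weakly_compact K'"
    by (rule weakly_compact_closed_convex_subset[OF wK0 K'K0 _ cK']) (simp add: K'_def)
  have ntK': "nontrivial K'"
  proof -
    have "d 0 \<noteq> d 1"
    proof
      assume "d 0 = d 1"
      then have "e (d 0) = e (d 1)" by simp
      then show False using ed[of 0] ed[of 1] by simp
    qed
    then show ?thesis unfolding nontrivial_def using dD DK' by blast
  qed
  have TD: "T x \<in> D" for x unfolding T_def using dD by simp
  have TK: "T ` K' \<subseteq> K'" using TD DK' by blast
  have nofix: "\<forall>x\<in>K'. T x \<noteq> x"
  proof (intro ballI notI)
    fix x assume "x \<in> K'" "T x = x"
    show False
    proof (cases "x \<in> D")
      case True
      then have "d (Suc (e x)) = x" using \<open>T x = x\<close> unfolding T_def by simp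
      then have "e x = Suc (e x)" using ed[of "Suc (e x)"] by simp
      then show False by simp
    next
      case False
      then show False using \<open>T x = x\<close> TD[of x] by simp
    qed
  qed
  have Td: "T (d n) = d (Suc n)" for n unfolding T_def using dD ed by simp
  have dim: "diminishes_radius T K'"
    unfolding diminishes_radius_def
  proof (intro allI impI ballI)
    fix A x assume A: "A \<subseteq> K' \<and> convex A \<and> T ` A \<subseteq> A" and x: "x \<in> K'"
    show "rad (T x) (T ` A) \<le> rad x A"
    proof (cases "A = {}")
      case True then show ?thesis by (simp add: rad_def)
    next
      case False
      have AK': "A \<subseteq> K'" using A by blast
      have bA: "bounded A" using bounded_subset[OF bK' AK'] .
      have TAK': "T ` A \<subseteq> K'" using AK' TK by (meson image_mono subset_trans)
      have bTA: "bounded (T ` A)" using bounded_subset[OF bK' TAK'] .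
      have up: "rad (T x) (T ` A) \<le> \<delta>"
      proof -
        have "norm (T x - y) \<le> \<delta>" if "y \<in> T ` A" for y
        proof -
          have "T x \<in> K0" using TD[of x] DK by (rule subsetD[rotated])
          moreover have "y \<in> K0" using that TAK' K'K0 by (meson subsetD)
          ultimately show ?thesis using diameter_bounded_bound[OF bK0] dK0 by (simp add: dist_norm)
        qed
        then show ?thesis using rad_le_iff[OF bTA] False by blast
      qed
      have low: "\<delta> \<le> rad x A"
      proof -
        obtain a0 where a0: "a0 \<in> A" using False by blast
        define k where "k = e (T a0)"
        have dk: "d k = T a0" unfolding k_def using de[OF TD] .
        have dA: "d j \<in> A" if "k \<le> j" for j
          using that
        proof (induction j rule: dec_induct)
          case base
          have "T a0 \<in> A" using a0 A by blast
          then show ?case using dk by simp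
        next
          case (step j)
          then have "T (d j) \<in> A" using A by blast
          then show ?case using Td[of j] by simp
        qed
        have far: "\<delta> - \<epsilon> < rad x A" if eps: "\<epsilon> > 0" for \<epsilon>
        proof -
          have fin: "finite (d ` {..<k})" by simp
          have sub: "d ` {..<k} \<subseteq> (\<Union>n. Gs K0 \<delta> a n)"
          proof
            fix z assume "z \<in> d ` {..<k}"
            then obtain i where "z = d i" by blast
            then show "z \<in> (\<Union>n. Gs K0 \<delta> a n)" using dD[of i] unfolding D_def by simp
          qed
          have xx: "x \<in> closure (convex hull (\<Union>n. Gs K0 \<delta> a n))" using x unfolding K'_def D_def .
          obtain y where y0: "y \<in> (\<Union>n. Gs K0 \<delta> a n) - d ` {..<k}" and y3: "\<delta> - \<epsilon> < norm (x - y)"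
            using Gs_far[OF a xx eps fin sub] by (rule bexE)
          have y: "y \<in> D" "y \<notin> d ` {..<k}" "\<delta> - \<epsilon> < norm (x - y)"
            using y0 y3 unfolding D_def by auto
          have "\<not> e y < k"
          proof
            assume "e y < k"
            then have "d (e y) \<in> d ` {..<k}" by simp
            then show False using y(2) de[OF y(1)] by simp
          qed
          then have "k \<le> e y" by simp
          then have "d (e y) \<in> A" by (rule dA)
          then have "y \<in> A" using de[OF y(1)] by simp
          then have "norm (x - y) \<le> rad x A" by (rule rad_ge[OF bA])
          then show ?thesis using y(3) by linarith
        qed
        show ?thesis
        proof (rule ccontr)
          assume "\<not> \<delta> \<le> rad x A"
          then have "\<delta> - rad x A > 0" by simp
          from far[OF this] show False by linarith
        qed
      qed
      show ?thesis using up low by linarith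
    qed
  qed
  show ?thesis using ntK' wK' cK' TK dim nofix by blast
qed
end

lemma wns_from_fpp:
  assumes fpp: "weak_fpp_diminishing TYPE('a::banach)"
  shows "weak_normal_structure TYPE('a)"
  unfolding weak_normal_structure_def
proof (intro allI impI)
  fix K :: "'a set" assume K: "nontrivial K \<and> weakly_compact K \<and> convex K"
  show "normal_structure K"
    unfolding normal_structure_def
  proof (rule ccontr)
    assume "\<not> (\<forall>K0. K0 \<subseteq> K \<and> closed K0 \<and> convex K0 \<and> 0 < diameter K0 \<longrightarrow> (\<exists>x0\<in>K0. rad x0 K0 < diameter K0))"
    then obtain K0 where K0: "K0 \<subseteq> K" "closed K0" "convex K0" "0 < diameter K0"
      and nd0: "\<not> (\<exists>x0\<in>K0. rad x0 K0 < diameter K0)" by blast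
    have nd: "\<And>x. x \<in> K0 \<Longrightarrow> diameter K0 \<le> rad x K0" using nd0 by (simp add: not_less)
    have bK: "bounded K" using weakly_compact_bounded[of K] K by blast
    have bK0: "bounded K0" using bounded_subset[OF bK K0(1)] .
    have wK0: "weakly_compact K0" using weakly_compact_closed_convex_subset[of K K0] K K0(1,2,3) by blast
    obtain K' and T :: "'a \<Rightarrow> 'a" where KT: "nontrivial K'" "weakly_compact K'" "convex K'" "T ` K' \<subseteq> K'"
      "diminishes_radius T K'" "\<forall>x\<in>K'. T x \<noteq> x"
      using diametral_no_fpp[OF K0(2,3) bK0 refl K0(4) nd wK0] by blast
    then show False using fpp unfolding weak_fpp_diminishing_def by blast
  qed
qed

theorem theorem3p2:
  "weak_normal_structure TYPE('a::banach) \<longleftrightarrow> weak_fpp_diminishing TYPE('a::banach)"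
proof
  assume "weak_normal_structure TYPE('a)"
  then show "weak_fpp_diminishing TYPE('a)"
    unfolding weak_fpp_diminishing_def using fpp_from_wns by blast
next
  assume "weak_fpp_diminishing TYPE('a)"
  then show "weak_normal_structure TYPE('a)" by (rule wns_from_fpp)
qed

end
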